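(* Consider the following two-bidder auction with limit price $L>0$. A single good has common value $v$ with CDF $F_v$, density $f_v$, support $\mathbb{R}_+$ and finite mean, $\mathbb{E}[v]>L$, and $\underline v$ in the support of $F_v$ satisfies $L=\mathbb{E}[\tilde v\mid\tilde v<\underline v]$ ($\tilde v\sim F_v$). Alice bids knowing only $F_v$; then $v$ is realized and Bob, observing $v$ but not Alice's bid, bids. The highest bid wins and pays its bid (payoff $v$ minus bid) unless it is strictly below $L$, in which case the good is unsold. If bids tie, Bob wins; Bob can win with a bid equal to $L$; a winning bid of Alice equal exactly to $L$ results in no sale. Let $$\beta_L(v)=\begin{cases}\mathbb{E}[\tilde v\mid \tilde v<v] & v\ge \underline v,\\ L & L<v<\underline v,\\ 0 & v\le L,\end{cases}$$ and consider the equilibrium in which Bob bids $\beta_L(v)$ and Alice draws $v'\sim F_v$ independently and bids $\beta_L(v')$. Then Bob's expected profit is $$\begin{aligned}\Pi_B&=\mathbb{E}\left[\max\left(v_1\mathbf{1}\{v_1\ge\underline v\}-v_2\mathbf{1}\{v_2\ge\underline v\},0\right)\right]+\mathbb{E}\left[(v_1-L)\mathbf{1}\{L<v_1<\underline v\}\mathbf{1}\{v_2<\underline v\}\right]-\mathbb{E}\left[v_1\mathbf{1}\{v_1<\underline v\}\mathbf{1}\{v_2\ge\underline v\}\right]\\&=\mathbb{E}\left[\max\left(v_1\mathbf{1}\{v_1\ge\underline v\}-v_2\mathbf{1}\{v_2\ge\underline v\},0\right)\right]+F_v(\underline v)\,\mathbb{E}\left[(v-L)\mathbf{1}\{L<v<\underline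 v\}\right]-(1-F_v(\underline v))\,\mathbb{E}[v\mathbf{1}\{v<\underline v\}],\end{aligned}$$ where $v_1,v_2$ are i.i.d. draws from $F_v$ and $v\sim F_v$.
   Context: Bidders are risk neutral. $\mathbf{1}\{\cdot\}$ denotes an indicator. *)

theory Defs
  imports "HOL-Probability.Probability"
begin

definition cond_mean_below :: "real measure \<Rightarrow> real \<Rightarrow> real" where
  "cond_mean_below M t =
     (\<integral>x. x * indicator {..<t} x \<partial>M) / measure M {..<t}"

definition beta_L :: "real measure \<Rightarrow> real \<Rightarrow> real \<Rightarrow> real \<Rightarrow> real" where
  "beta_L M L vlow v =
     (if v \<ge> vlow then cond_mean_below M v
      else if L < v then L else 0)"

definition bob_payoff :: "real \<Rightarrow> real \<Rightarrow> real \<Rightarrow> real \<Rightarrow> real" where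
  "bob_payoff L bB bA v = (if bA \<le> bB \<and> L \<le> bB then v - bB else 0)"

definition bob_expected_profit :: "real measure \<Rightarrow> real \<Rightarrow> real \<Rightarrow> real" where
  "bob_expected_profit M L vlow =
     (\<integral>z. bob_payoff L (beta_L M L vlow (fst z)) (beta_L M L vlow (snd z)) (fst z)
        \<partial>(M \<Otimes>\<^sub>M M))"

end

theory Submission
  imports Defs
begin


lemma cm_meas:
  assumes "prob_space M" "sets M = sets borel"
  shows "cond_mean_below M \<in> borel_measurable borel"
proof -
  interpret prob_space M by fact
  have m1: "mono (\<lambda>t. measure M {..<t})"
    by (auto simp: mono_def intro!: finite_measure_mono simp: assms(2))
  have "(\<lambda>(t, x). x * indicator {..<t} x) \<in> borel_measurable (borel \<Otimes>\<^sub>M M)"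
  proof -
    have "(\<lambda>(t::real, x::real). x * indicator {..<t} x) = (\<lambda>p. snd p * (if snd p < fst p then 1 else 0))"
      by (auto simp: indicator_def fun_eq_iff)
    then show ?thesis using assms(2) by (simp add: measurable_cong_sets[OF refl sets_pair_measure_cong[OF refl assms(2)]])
  qed
  then have "(\<lambda>t. \<integral>x. x * indicator {..<t} x \<partial>M) \<in> borel_measurable borel"
    by (rule borel_measurable_lebesgue_integral)
  moreover have "(\<lambda>t. measure M {..<t}) \<in> borel_measurable borel"
    using m1 borel_measurable_mono by blast
  ultimately show ?thesis unfolding cond_mean_below_def[abs_def] by measurable
qed



lemma cm_lt:
  assumes P: "prob_space M" and S: "sets M = sets borel" and I: "integrable M (\<lambda>x. x)"
    and pos: "measure M {..<s} > 0"
  shows "cond_mean_below M s < s"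
proof -
  interpret prob_space M by fact
  let ?A = "\<integral>x. x * indicator {..<s} x \<partial>M"
  have ia: "integrable M (\<lambda>x. x * indicator {..<s} x)"
    using I by (intro integrable_real_mult_indicator) (auto simp: S)
  have ip: "integrable M (\<lambda>x. (s - x) * indicator {..<s} x)"
  proof -
    have "integrable M (\<lambda>x. s * indicator {..<s} x - x * indicator {..<s} x)"
      by (intro Bochner_Integration.integrable_diff ia integrable_mult_right integrable_real_indicator) (auto simp: S less_top[symmetric])
    then show ?thesis by (simp add: left_diff_distrib)
  qed
  have eq: "(\<integral>x. (s - x) * indicator {..<s} x \<partial>M) = s * measure M {..<s} - ?A"
    unfolding left_diff_distrib
    by (subst Bochner_Integration.integral_diff[OF _ ia])
       (auto intro!: integrable_mult_right integrable_real_indicator simp: S less_top[symmetric])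
  have nn: "AE x in M. 0 \<le> (s - x) * indicator {..<s} x" by (auto simp: indicator_def)
  have "(\<integral>x. (s - x) * indicator {..<s} x \<partial>M) \<noteq> 0"
  proof
    assume "(\<integral>x. (s - x) * indicator {..<s} x \<partial>M) = 0"
    then have "AE x in M. (s - x) * indicator {..<s} x = 0"
      using integral_nonneg_eq_0_iff_AE[OF ip nn] by simp
    then have "AE x in M. indicator {..<s} x = (0::real)"
      by eventually_elim (auto simp: indicator_def)
    then have "(\<integral>x. indicator {..<s} x \<partial>M) = (0::real)"
      by (rule integral_eq_zero_AE)
    then show False using pos by (simp add: S)
  qed
  moreover have "(\<integral>x. (s - x) * indicator {..<s} x \<partial>M) \<ge> 0"
    using nn by (simp add: integral_nonneg_AE)
  ultimately have "?A < s * measure M {..<s}" using eq by linarith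
  then show ?thesis unfolding cond_mean_below_def using pos by (simp add: divide_less_eq)
qed

lemma cm_mono:
  assumes P: "prob_space M" and S: "sets M = sets borel" and I: "integrable M (\<lambda>x. x)"
    and pos: "measure M {..<s} > 0" and st: "s < t" and Q: "measure M {s<..<t} > 0"
  shows "cond_mean_below M s < cond_mean_below M t"
proof -
  interpret prob_space M by fact
  define As where "As = (\<integral>x. x * indicator {..<s} x \<partial>M)"
  define B where "B = (\<integral>x. x * indicator {s..<t} x \<partial>M)"
  define Ps where "Ps = measure M {..<s}"
  define Qt where "Qt = measure M {s..<t}"
  have ia: "integrable M (\<lambda>x. x * indicator {..<s} x)"
    using I by (intro integrable_real_mult_indicator) (auto simp: S)
  have ib: "integrable M (\<lambda>x. x * indicator {s..<t} x)"
    using I by (intro integrable_real_mult_indicator) (auto simp: S)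
  have "(\<lambda>x. x * indicator {..<t} x) = (\<lambda>x. x * indicator {..<s} x + x * indicator {s..<t} x)"
    using st by (auto simp: fun_eq_iff indicator_def)
  then have At: "(\<integral>x. x * indicator {..<t} x \<partial>M) = As + B"
    using ia ib by (simp add: As_def B_def)
  have "{..<t} = {..<s} \<union> {s..<t}" using st by auto
  moreover have "measure M ({..<s} \<union> {s..<t}) = Ps + Qt"
    unfolding Ps_def Qt_def by (rule finite_measure_Union) (auto simp: S)
  ultimately have Pt: "measure M {..<t} = Ps + Qt" by simp
  have "Qt \<ge> measure M {s<..<t}" unfolding Qt_def
    by (rule finite_measure_mono) (auto simp: S)
  then have Qp: "Qt > 0" using Q by linarith
  have "B \<ge> (\<integral>x. s * indicator {s..<t} x \<partial>M)"
    unfolding B_def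
  proof (rule integral_mono[OF _ ib])
    show "integrable M (\<lambda>x. s * indicator {s..<t} x)"
      by (intro integrable_mult_right integrable_real_indicator) (auto simp: S less_top[symmetric])
  qed (auto simp: indicator_def)
  then have BQ: "B \<ge> s * Qt" by (simp add: Qt_def S)
  have "As / Ps < s" using cm_lt[OF P S I pos] by (simp add: cond_mean_below_def As_def Ps_def)
  then have "As < s * Ps" using pos by (simp add: Ps_def divide_less_eq)
  then have "As * Qt < s * Ps * Qt" using Qp by simp
  also have "\<dots> \<le> B * Ps" using BQ pos by (simp add: Ps_def mult.commute mult.left_commute mult_right_mono)
  finally have "As * Qt < B * Ps" .
  then have "As / Ps < (As + B) / (Ps + Qt)"
    using pos Qp by (simp add: Ps_def divide_less_eq less_divide_eq field_simps)
  then show ?thesis unfolding cond_mean_below_def At Pt by (simp add: As_def Ps_def)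
qed



lemma payoff_pt:
  assumes cv: "cond_mean_below M vlow = L" and L0: "0 < L" and Lv: "L < vlow"
    and mono: "\<And>a b. 0 < a \<Longrightarrow> a < b \<Longrightarrow> cond_mean_below M a < cond_mean_below M b"
  shows "bob_payoff L (beta_L M L vlow v1) (beta_L M L vlow v2) v1 =
     indicator {vlow..} v1 * indicator {..v1} v2 * (v1 - cond_mean_below M v1)
     + (v1 - L) * indicator {L<..<vlow} v1 * indicator {..vlow} v2"
proof -
  let ?c = "cond_mean_below M"
  have le: "?c a \<le> ?c b \<longleftrightarrow> a \<le> b" if "vlow \<le> a" "vlow \<le> b" for a b
    using mono[of a b] mono[of b a] that Lv L0 by (cases a b rule: linorder_cases) auto
  have geL: "?c a \<ge> L" if "vlow \<le> a" for a using le[of vlow a] that cv by auto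
  have gtL: "?c a > L" if "vlow < a" for a using mono[of vlow a] that cv L0 Lv by auto
  show ?thesis
  proof (cases "vlow \<le> v1")
    case True
    then show ?thesis using le[of v2 v1] geL[of v1] geL[of v2] L0 Lv
      by (cases "vlow \<le> v2") (auto simp: bob_payoff_def beta_L_def indicator_def)
  next
    case False
    then show ?thesis using gtL[of v2] L0 Lv cv
      by (cases "vlow < v2") (auto simp: bob_payoff_def beta_L_def indicator_def)
  qed
qed



lemma intN:
  assumes P: "prob_space M" and S: "sets M = sets borel" and I: "integrable M (\<lambda>x::real. x)"
    and hm: "h \<in> borel_measurable (borel \<Otimes>\<^sub>M borel)"
    and hb: "\<And>z. \<bar>h z\<bar> \<le> C + \<bar>fst z\<bar> + \<bar>snd z\<bar>"
  shows "integrable (M \<Otimes>\<^sub>M M) h"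
proof -
  interpret prob_space M by fact
  interpret pair_prob_space M M by unfold_locales
  have SN: "sets (M \<Otimes>\<^sub>M M) = sets (borel \<Otimes>\<^sub>M borel)"
    by (rule sets_pair_measure_cong) (auto simp: S)
  have IA: "integrable M (\<lambda>x. \<bar>x\<bar>)" using I by auto
  have i1: "integrable (M \<Otimes>\<^sub>M M) (\<lambda>z. \<bar>fst z\<bar>)"
  proof (rule Fubini_integrable)
    show "(\<lambda>z. \<bar>fst z\<bar>) \<in> borel_measurable (M \<Otimes>\<^sub>M M)"
      unfolding measurable_cong_sets[OF SN refl] by measurable
    show "integrable M (\<lambda>x. \<integral>y. norm \<bar>fst (x, y)\<bar> \<partial>M)" using IA by simp
  qed auto
  have i2: "integrable (M \<Otimes>\<^sub>M M) (\<lambda>z. \<bar>snd z\<bar>)"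
  proof (rule Fubini_integrable)
    show "(\<lambda>z. \<bar>snd z\<bar>) \<in> borel_measurable (M \<Otimes>\<^sub>M M)"
      unfolding measurable_cong_sets[OF SN refl] by measurable
    show "integrable M (\<lambda>x. \<integral>y. norm \<bar>snd (x, y)\<bar> \<partial>M)" by simp
  qed (use IA in auto)
  have i3: "integrable (M \<Otimes>\<^sub>M M) (\<lambda>z. C + \<bar>fst z\<bar> + \<bar>snd z\<bar>)"
    using i1 i2 by (intro Bochner_Integration.integrable_add) auto
  show ?thesis
  proof (rule Bochner_Integration.integrable_bound[OF i3])
    show "h \<in> borel_measurable (M \<Otimes>\<^sub>M M)" using hm measurable_cong_sets[OF SN refl] by blast
    show "AE x in M \<Otimes>\<^sub>M M. norm (h x) \<le> norm (C + \<bar>fst x\<bar> + \<bar>snd x\<bar>)"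
      using hb by (auto intro!: AE_I2 order.trans[OF hb] simp del: norm_conv_dist) 
  qed
qed


theorem theorem3:
  fixes f :: "real \<Rightarrow> real" and M :: "real measure" and L vlow :: real
  assumes L_pos: "L > 0"
    and f_meas: "f \<in> borel_measurable borel"
    and f_nonneg: "\<And>x. f x \<ge> 0"
    and M_def: "M = density lborel (\<lambda>x. ennreal (f x))"
    and prob: "prob_space M"
    and supp_nonneg: "measure M {..<0} = 0"
    and supp_full: "\<And>a b. 0 \<le> a \<Longrightarrow> a < b \<Longrightarrow> measure M {a<..<b} > 0"
    and finite_mean: "integrable M (\<lambda>x. x)"
    and mean_gt: "(\<integral>x. x \<partial>M) > L"
    and vlow_supp: "vlow \<ge> 0"
    and vlow_def: "L = cond_mean_below M vlow"
  shows "bob_expected_profit M L vlow =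
           (\<integral>z. max ((fst z) * indicator {vlow..} (fst z) - (snd z) * indicator {vlow..} (snd z)) 0 \<partial>(M \<Otimes>\<^sub>M M))
         + (\<integral>z. ((fst z) - L) * indicator {L<..<vlow} (fst z) * indicator {..<vlow} (snd z) \<partial>(M \<Otimes>\<^sub>M M))
         - (\<integral>z. (fst z) * indicator {..<vlow} (fst z) * indicator {vlow..} (snd z) \<partial>(M \<Otimes>\<^sub>M M))
     \<and> (\<integral>z. max ((fst z) * indicator {vlow..} (fst z) - (snd z) * indicator {vlow..} (snd z)) 0 \<partial>(M \<Otimes>\<^sub>M M))
         + (\<integral>z. ((fst z) - L) * indicator {L<..<vlow} (fst z) * indicator {..<vlow} (snd z) \<partial>(M \<Otimes>\<^sub>M M))
         - (\<integral>z. (fst z) * indicator {..<vlow} (fst z) * indicator {vlow..} (snd z) \<partial>(M \<Otimes>\<^sub>M M))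
       = (\<integral>z. max ((fst z) * indicator {vlow..} (fst z) - (snd z) * indicator {vlow..} (snd z)) 0 \<partial>(M \<Otimes>\<^sub>M M))
         + measure M {..vlow} * (\<integral>v. (v - L) * indicator {L<..<vlow} v \<partial>M)
         - (1 - measure M {..vlow}) * (\<integral>v. v * indicator {..<vlow} v \<partial>M)"
  proof -
  interpret P: prob_space M by (rule prob)
  interpret N: pair_prob_space M M by unfold_locales
  have S: "sets M = sets borel" by (simp add: M_def)
  have SP: "space M = UNIV" by (simp add: M_def)
  have SN: "sets (M \<Otimes>\<^sub>M M) = sets (borel \<Otimes>\<^sub>M borel)"
    by (rule sets_pair_measure_cong) (auto simp: S)
  note mcong = measurable_cong_sets[OF SN refl]
  let ?c = "cond_mean_below M"
  have sing_e: "emeasure M {x} = 0" for x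
  proof -
    have "emeasure M {x} = (\<integral>\<^sup>+y. ennreal (f y) * indicator {x} y \<partial>lborel)"
      unfolding M_def using f_meas by (subst emeasure_density) auto
    also have "\<dots> = 0"
      by (rule nn_integral_null_set) (simp add: finite_imp_null_set_lborel)
    finally show ?thesis by simp
  qed
  have sing: "measure M {x} = 0" for x using sing_e[of x] by (simp add: measure_def)
  have AEne: "AE y in M. y \<noteq> x" for x
    by (rule AE_I'[of "{x}"]) (auto simp: null_sets_def S sing_e)
  have atMost_eq: "measure M {..a} = measure M {..<a}" for a
  proof -
    have "measure M ({..<a} \<union> {a}) = measure M {..<a} + measure M {a}"
      by (rule P.finite_measure_Union) (auto simp: S)
    moreover have "{..<a} \<union> {a} = {..a}" by auto
    ultimately show ?thesis using sing[of a] by simp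
  qed
  have Ppos: "measure M {..<a} > 0" if "a > 0" for a
  proof -
    have "measure M {0<..<a} \<le> measure M {..<a}" by (rule P.finite_measure_mono) (auto simp: S)
    then show ?thesis using supp_full[of 0 a] that by linarith
  qed
  have vpos: "vlow > 0"
  proof (rule ccontr)
    assume "\<not> vlow > 0"
    then have "vlow = 0" using vlow_supp by simp
    then have "L = 0" using vlow_def supp_nonneg by (simp add: cond_mean_below_def)
    then show False using L_pos by simp
  qed
  have mono: "?c a < ?c b" if "0 < a" "a < b" for a b
    using cm_mono[OF prob S finite_mean Ppos[OF that(1)] that(2)] supp_full[of a b] that by simp
  have clt: "?c a < a" if "0 < a" for a using cm_lt[OF prob S finite_mean Ppos[OF that]] .
  have Lv: "L < vlow" using clt[OF vpos] vlow_def by simp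
  have cge: "?c a \<ge> L" if "vlow \<le> a" for a
    using mono[of vlow a] that vpos vlow_def by (cases "a = vlow") auto
  have cmeas[measurable]: "?c \<in> borel_measurable borel" by (rule cm_meas[OF prob S])
  have pay: "bob_payoff L (beta_L M L vlow v1) (beta_L M L vlow v2) v1 =
     indicator {vlow..} v1 * indicator {..v1} v2 * (v1 - ?c v1)
     + (v1 - L) * indicator {L<..<vlow} v1 * indicator {..vlow} v2" for v1 v2
    by (rule payoff_pt[OF vlow_def[symmetric] L_pos Lv mono])
  define b1 where "b1 z = indicator {vlow..} (fst z) * indicator {..fst z} (snd z) * (fst z - ?c (fst z))" for z :: "real \<times> real"
  define b2 where "b2 z = (fst z - L) * indicator {L<..<vlow} (fst z) * indicator {..vlow} (snd z)" for z :: "real \<times> real"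
  define mx where "mx z = max ((fst z) * indicator {vlow..} (fst z) - (snd z) * indicator {vlow..} (snd z)) (0::real)" for z :: "real \<times> real"
  define t2 where "t2 z = ((fst z) - L) * indicator {L<..<vlow} (fst z) * indicator {..<vlow} (snd z)" for z :: "real \<times> real"
  define t3 where "t3 z = (fst z) * indicator {..<vlow} (fst z) * indicator {vlow..} (snd z)" for z :: "real \<times> real"
  define K where "K = (\<integral>v. v * indicator {..<vlow} v \<partial>M)"
  define E2 where "E2 = (\<integral>v. (v - L) * indicator {L<..<vlow} v \<partial>M)"
  define m where "m = measure M {..vlow}"
  have b1_alt: "b1 = (\<lambda>z. indicator {vlow..} (fst z) * (if snd z \<le> fst z then 1 else 0) * (fst z - ?c (fst z)))"
    by (auto simp: b1_def fun_eq_iff indicator_def)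
  have ib1: "integrable (M \<Otimes>\<^sub>M M) b1"
  proof (rule intN[OF prob S finite_mean, where C = 0])
    show "b1 \<in> borel_measurable (borel \<Otimes>\<^sub>M borel)" unfolding b1_alt by measurable
    fix z :: "real \<times> real"
    show "\<bar>b1 z\<bar> \<le> 0 + \<bar>fst z\<bar> + \<bar>snd z\<bar>"
      using cge[of "fst z"] clt[of "fst z"] vpos L_pos
      by (auto simp: b1_def indicator_def)
  qed
  have ib2: "integrable (M \<Otimes>\<^sub>M M) b2"
  proof (rule intN[OF prob S finite_mean, where C = L])
    show "b2 \<in> borel_measurable (borel \<Otimes>\<^sub>M borel)" unfolding b2_def by measurable
    fix z :: "real \<times> real"
    show "\<bar>b2 z\<bar> \<le> L + \<bar>fst z\<bar> + \<bar>snd z\<bar>"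
      using L_pos by (auto simp: b2_def indicator_def)
  qed
  have imx: "integrable (M \<Otimes>\<^sub>M M) mx"
  proof (rule intN[OF prob S finite_mean, where C = 0])
    show "mx \<in> borel_measurable (borel \<Otimes>\<^sub>M borel)" unfolding mx_def by measurable
    fix z :: "real \<times> real"
    show "\<bar>mx z\<bar> \<le> 0 + \<bar>fst z\<bar> + \<bar>snd z\<bar>"
      by (auto simp: mx_def indicator_def)
  qed
  have it2: "integrable (M \<Otimes>\<^sub>M M) t2"
  proof (rule intN[OF prob S finite_mean, where C = L])
    show "t2 \<in> borel_measurable (borel \<Otimes>\<^sub>M borel)" unfolding t2_def by measurable
    fix z :: "real \<times> real"
    show "\<bar>t2 z\<bar> \<le> L + \<bar>fst z\<bar> + \<bar>snd z\<bar>"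
      using L_pos by (auto simp: t2_def indicator_def)
  qed
  have it3: "integrable (M \<Otimes>\<^sub>M M) t3"
  proof (rule intN[OF prob S finite_mean, where C = 0])
    show "t3 \<in> borel_measurable (borel \<Otimes>\<^sub>M borel)" unfolding t3_def by measurable
    fix z :: "real \<times> real"
    show "\<bar>t3 z\<bar> \<le> 0 + \<bar>fst z\<bar> + \<bar>snd z\<bar>"
      by (auto simp: t3_def indicator_def)
  qed
  have yint: "integrable M (\<lambda>y. y * indicator A y)" if "A \<in> sets borel" for A
    using finite_mean that by (intro integrable_real_mult_indicator) (auto simp: S)
  have iint: "integrable M (indicator A :: real \<Rightarrow> real)" if "A \<in> sets borel" for A
    using that by (intro integrable_real_indicator) (auto simp: S less_top[symmetric])
  have in_b1: "(\<integral>y. b1 (x, y) \<partial>M) = indicator {vlow..} x * (x - ?c x) * measure M {..x}" for x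
    unfolding b1_def by (simp add: S mult.commute mult.left_commute)
  have in_b2: "(\<integral>y. b2 (x, y) \<partial>M) = (x - L) * indicator {L<..<vlow} x * m" for x
    unfolding b2_def m_def by (simp add: S)
  have in_t2: "(\<integral>y. t2 (x, y) \<partial>M) = (x - L) * indicator {L<..<vlow} x * m" for x
    unfolding t2_def m_def by (simp add: S atMost_eq)
  have in_t3: "(\<integral>y. t3 (x, y) \<partial>M) = x * indicator {..<vlow} x * measure M {vlow..}" for x
    unfolding t3_def by (simp add: S)
  have in_mx: "(\<integral>y. mx (x, y) \<partial>M) = indicator {vlow..} x * (x * measure M {..x} - (\<integral>y. y * indicator {vlow..x} y \<partial>M))" for x
  proof -
    have "(\<lambda>y. mx (x, y)) = (\<lambda>y. indicator {vlow..} x * (x * indicator {..x} y - y * indicator {vlow..x} y))"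
      using vpos by (auto simp: mx_def fun_eq_iff indicator_def)
    then show ?thesis
      using yint[of "{vlow..x}"] iint[of "{..x}"]
      by (simp add: Bochner_Integration.integral_diff S)
  qed
  have key: "(\<integral>y. mx (x, y) \<partial>M) = (\<integral>y. b1 (x, y) \<partial>M) + indicator {vlow..} x * K" for x
  proof (cases "vlow \<le> x")
    case False then show ?thesis by (simp add: in_mx in_b1)
  next
    case True
    then have xpos: "x > 0" using vpos by simp
    have D: "(\<integral>y. y * indicator {vlow..x} y \<partial>M) = (\<integral>y. y * indicator {vlow..<x} y \<partial>M)"
    proof (rule integral_cong_AE)
      show "AE y in M. y * indicator {vlow..x} y = y * indicator {vlow..<x} y"
        using AEne[of x] by (auto elim!: eventually_mono simp: indicator_def)
    qed (auto intro!: borel_measurable_integrable yint)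
    have "(\<lambda>y. y * indicator {..<x} y) = (\<lambda>y. y * indicator {..<vlow} y + y * indicator {vlow..<x} y)"
      using True by (auto simp: fun_eq_iff indicator_def)
    then have A: "(\<integral>y. y * indicator {..<x} y \<partial>M) = K + (\<integral>y. y * indicator {vlow..<x} y \<partial>M)"
      using yint[of "{..<vlow}"] yint[of "{vlow..<x}"] by (simp add: K_def)
    have "?c x * measure M {..x} = (\<integral>y. y * indicator {..<x} y \<partial>M)"
      using Ppos[OF xpos] by (simp add: cond_mean_below_def atMost_eq)
    then show ?thesis using True
      by (simp add: in_mx in_b1 D A algebra_simps)
  qed
  have F_b1: "(\<integral>x. (\<integral>y. b1 (x, y) \<partial>M) \<partial>M) = integral\<^sup>L (M \<Otimes>\<^sub>M M) b1" by (rule N.integral_fst'[OF ib1])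
  have F_mx: "(\<integral>x. (\<integral>y. mx (x, y) \<partial>M) \<partial>M) = integral\<^sup>L (M \<Otimes>\<^sub>M M) mx" by (rule N.integral_fst'[OF imx])
  have F_b2: "(\<integral>x. (\<integral>y. b2 (x, y) \<partial>M) \<partial>M) = integral\<^sup>L (M \<Otimes>\<^sub>M M) b2" by (rule N.integral_fst'[OF ib2])
  have F_t2: "(\<integral>x. (\<integral>y. t2 (x, y) \<partial>M) \<partial>M) = integral\<^sup>L (M \<Otimes>\<^sub>M M) t2" by (rule N.integral_fst'[OF it2])
  have F_t3: "(\<integral>x. (\<integral>y. t3 (x, y) \<partial>M) \<partial>M) = integral\<^sup>L (M \<Otimes>\<^sub>M M) t3" by (rule N.integral_fst'[OF it3])
  have Ib1': "integrable M (\<lambda>x. \<integral>y. b1 (x, y) \<partial>M)" by (rule N.integrable_fst'[OF ib1])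
  have compl: "measure M {vlow..} = 1 - m"
  proof -
    have "measure M {vlow..} = measure M (space M - {..<vlow})" by (rule arg_cong[where f="measure M"]) (auto simp: SP)
    also have "\<dots> = 1 - measure M {..<vlow}" by (rule P.prob_compl) (simp add: S)
    finally show ?thesis by (simp add: m_def atMost_eq)
  qed
  have e_mx: "integral\<^sup>L (M \<Otimes>\<^sub>M M) mx = integral\<^sup>L (M \<Otimes>\<^sub>M M) b1 + K * measure M {vlow..}"
  proof -
    have "integral\<^sup>L (M \<Otimes>\<^sub>M M) mx = (\<integral>x. (\<integral>y. b1 (x, y) \<partial>M) + K * indicator {vlow..} x \<partial>M)"
      unfolding F_mx[symmetric] key by (simp add: mult.commute)
    also have "\<dots> = (\<integral>x. (\<integral>y. b1 (x, y) \<partial>M) \<partial>M) + K * measure M {vlow..}"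
      using Ib1' iint[of "{vlow..}"] by (simp add: S)
    finally show ?thesis using F_b1 by simp
  qed
  have e_b2: "integral\<^sup>L (M \<Otimes>\<^sub>M M) b2 = E2 * m"
    unfolding F_b2[symmetric] in_b2 E2_def by simp
  have e_t2: "integral\<^sup>L (M \<Otimes>\<^sub>M M) t2 = E2 * m"
    unfolding F_t2[symmetric] in_t2 E2_def by simp
  have e_t3: "integral\<^sup>L (M \<Otimes>\<^sub>M M) t3 = K * (1 - m)"
    unfolding F_t3[symmetric] in_t3 K_def compl by simp
  have e_pay: "bob_expected_profit M L vlow = integral\<^sup>L (M \<Otimes>\<^sub>M M) b1 + integral\<^sup>L (M \<Otimes>\<^sub>M M) b2"
  proof -
    have "bob_expected_profit M L vlow = (\<integral>z. b1 z + b2 z \<partial>(M \<Otimes>\<^sub>M M))"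
      unfolding bob_expected_profit_def pay b1_def b2_def by simp
    also have "\<dots> = integral\<^sup>L (M \<Otimes>\<^sub>M M) b1 + integral\<^sup>L (M \<Otimes>\<^sub>M M) b2"
      by (rule Bochner_Integration.integral_add[OF ib1 ib2])
    finally show ?thesis .
  qed
  have G1: "bob_expected_profit M L vlow = integral\<^sup>L (M \<Otimes>\<^sub>M M) mx + integral\<^sup>L (M \<Otimes>\<^sub>M M) t2 - integral\<^sup>L (M \<Otimes>\<^sub>M M) t3"
    using e_pay e_mx e_b2 e_t2 e_t3 compl by simp
  have G2: "integral\<^sup>L (M \<Otimes>\<^sub>M M) mx + integral\<^sup>L (M \<Otimes>\<^sub>M M) t2 - integral\<^sup>L (M \<Otimes>\<^sub>M M) t3
      = integral\<^sup>L (M \<Otimes>\<^sub>M M) mx + m * E2 - (1 - m) * K"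
    using e_t2 e_t3 by (simp add: mult.commute)
  show ?thesis using G1 G2 unfolding mx_def t2_def t3_def m_def E2_def K_def by simp
qed


end
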